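(* For every combinatorial auction with nonempty winner set $W$ and every bidder $i\in N$, the BLO outcome $\pi^{BLO}$ satisfies $\pi^{BLO}_i\ge \frac{1}{|W|}\pi^*_i$, where $\pi^*_i=\max\{\pi_i:\pi\in U\}$. The bound is tight: for every integer $k\ge1$ there is a combinatorial auction with $|W|=k$ and a bidder $i$ with $\pi^*_i>0$ and $\pi^{BLO}_i=\frac{1}{k}\pi^*_i$.
   Context: A combinatorial auction (CA) has a finite set of bidders $N=\{1,\dots,n\}$, a finite set of items $M$, and for each bidder $i$ a valuation $v_i:2^M\to\mathbb{R}_{\ge 0}$ with $v_i(\emptyset)=0$ (bids are assumed equal to true valuations). For $S\subseteq N$ let $w(S)=\max\{\sum_{i\in S}v_i(a_i): a_i\subseteq M,\ a_i\cap a_j=\emptyset\ (i\ne j)\}$ (with $w(\emptyset)=0$). Fix an allocation $(a^*_i)_{i\in N}$ attaining $w(N)$; the winner set is $W=\{i: a^*_i\neq\emptyset\}$. The core is $U=\{\pi\in\mathbb{R}^N:\ \pi_i\ge 0\ \forall i\in N,\ \sum_{i\in N\setminus S}\pi_i\le w(N)-w(S)\ \forall S\subseteq N\}$. For $x,y\in\mathbb{R}^n$, $x$ leximin-dominates $y$ if, writing $x_{(1)}\le\dots\le x_{(n)}$ and $y_{(1)}\le\dots\le y_{(n)}$ for the sorted entries, there is $0\le k\le n-1$ with $x_{(j)}=y_{(j)}$ for $j\le k$ and $x_{(k+1)}>y_{(k+1)}$. The BLO outcome $\pi^{BLO}$ is the (unique) $\pi\in U$ that is not leximin-dominated by any $\pi'\in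 U$. *)

theory Defs
  imports Complex_Main
begin

definition valid_CA :: "nat set \<Rightarrow> nat set \<Rightarrow> (nat \<Rightarrow> nat set \<Rightarrow> real) \<Rightarrow> bool" where
  "valid_CA N M v \<longleftrightarrow> finite N \<and> finite M \<and>
     (\<forall>i\<in>N. v i {} = 0 \<and> (\<forall>A. A \<subseteq> M \<longrightarrow> v i A \<ge> 0))"

definition feasible_alloc :: "nat set \<Rightarrow> nat set \<Rightarrow> (nat \<Rightarrow> nat set) \<Rightarrow> bool" where
  "feasible_alloc M S a \<longleftrightarrow> (\<forall>i\<in>S. a i \<subseteq> M) \<and> (\<forall>i\<in>S. \<forall>j\<in>S. i \<noteq> j \<longrightarrow> a i \<inter> a j = {})"

definition wval :: "nat set \<Rightarrow> (nat \<Rightarrow> nat set \<Rightarrow> real) \<Rightarrow> nat set \<Rightarrow> real" where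
  "wval M v S = Max {(\<Sum>i\<in>S. v i (a i)) | a. feasible_alloc M S a}"

definition efficient_alloc :: "nat set \<Rightarrow> nat set \<Rightarrow> (nat \<Rightarrow> nat set \<Rightarrow> real) \<Rightarrow> (nat \<Rightarrow> nat set) \<Rightarrow> bool" where
  "efficient_alloc N M v a \<longleftrightarrow> feasible_alloc M N a \<and> (\<Sum>i\<in>N. v i (a i)) = wval M v N"

definition winners :: "nat set \<Rightarrow> (nat \<Rightarrow> nat set) \<Rightarrow> nat set" where
  "winners N a = {i\<in>N. a i \<noteq> {}}"

text \<open>The core; vectors in R^N are represented by functions vanishing outside N.\<close>
definition core :: "nat set \<Rightarrow> nat set \<Rightarrow> (nat \<Rightarrow> nat set \<Rightarrow> real) \<Rightarrow> (nat \<Rightarrow> real) set" where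
  "core N M v = {\<pi>. (\<forall>i. i \<notin> N \<longrightarrow> \<pi> i = 0) \<and> (\<forall>i\<in>N. \<pi> i \<ge> 0) \<and>
                    (\<forall>S. S \<subseteq> N \<longrightarrow> (\<Sum>i\<in>N - S. \<pi> i) \<le> wval M v N - wval M v S)}"

definition sorted_entries :: "nat set \<Rightarrow> (nat \<Rightarrow> real) \<Rightarrow> real list" where
  "sorted_entries N x = sort (map x (sorted_list_of_set N))"

definition leximin_dominates :: "nat set \<Rightarrow> (nat \<Rightarrow> real) \<Rightarrow> (nat \<Rightarrow> real) \<Rightarrow> bool" where
  "leximin_dominates N x y \<longleftrightarrow>
     (\<exists>k < card N. (\<forall>j < k. sorted_entries N x ! j = sorted_entries N y ! j) \<and>
                    sorted_entries N x ! k > sorted_entries N y ! k)"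

definition is_BLO :: "nat set \<Rightarrow> nat set \<Rightarrow> (nat \<Rightarrow> nat set \<Rightarrow> real) \<Rightarrow> (nat \<Rightarrow> real) \<Rightarrow> bool" where
  "is_BLO N M v \<pi> \<longleftrightarrow> \<pi> \<in> core N M v \<and> \<not> (\<exists>\<pi>'\<in>core N M v. leximin_dominates N \<pi>' \<pi>)"

definition pi_star :: "nat set \<Rightarrow> nat set \<Rightarrow> (nat \<Rightarrow> nat set \<Rightarrow> real) \<Rightarrow> nat \<Rightarrow> real" where
  "pi_star N M v i = Sup ((\<lambda>\<pi>. \<pi> i) ` core N M v)"

end

theory Submission
  imports Defs "HOL-Library.Multiset" "HOL-Library.FuncSet"
begin

lemma mset_map_sls: "finite A \<Longrightarrow> mset (map x (sorted_list_of_set A)) = image_mset x (mset_set A)"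
  by (metis mset_map mset_sorted_list_of_multiset sorted_list_of_mset_set)

lemma sorted_entries_split:
  fixes x :: "nat \<Rightarrow> real"
  assumes fin: "finite N" and iN: "i \<in> N" and BN: "B \<subseteq> N - {i}"
    and lo: "\<forall>k\<in>B. x k \<le> x i" and hi: "\<forall>k\<in>N - B - {i}. x i \<le> x k"
  shows "sorted_entries N x = sort (map x (sorted_list_of_set B)) @ [x i] @
            sort (map x (sorted_list_of_set (N - B - {i})))"
proof -
  have fB: "finite B" using fin BN finite_subset by blast
  have fC: "finite (N - B - {i})" using fin by simp
  have Neq: "N = B \<union> ({i} \<union> (N - B - {i}))" using iN BN by blast
  have ms: "mset_set N = mset_set B + ({#i#} + mset_set (N - B - {i}))"
    apply (subst Neq)
    apply (subst mset_set_Union) using fB fC BN apply auto[3]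
    apply (subst mset_set_Union) using fC BN by auto
  show ?thesis unfolding sorted_entries_def
  proof (rule properties_for_sort)
    show "mset (sort (map x (sorted_list_of_set B)) @ [x i] @ sort (map x (sorted_list_of_set (N - B - {i}))))
        = mset (map x (sorted_list_of_set N))"
      using fin fB fC ms by (simp only: mset_append mset_map_sls mset_sort) simp
    show "sorted (sort (map x (sorted_list_of_set B)) @ [x i] @ sort (map x (sorted_list_of_set (N - B - {i}))))"
      using lo hi fB fC by (auto simp: sorted_append intro: order_trans)
  qed
qed

lemma feas_vals_finite:
  assumes "finite S" "finite M"
  shows "finite {(\<Sum>i\<in>S. v i (a i)) | a. feasible_alloc M S a}"
proof -
  have "{(\<Sum>i\<in>S. v i (a i)) | a. feasible_alloc M S a} \<subseteq>
        (\<lambda>b. \<Sum>i\<in>S. v i (b i)) ` (PiE S (\<lambda>_. Pow M))"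
  proof
    fix y assume "y \<in> {(\<Sum>i\<in>S. v i (a i)) | a. feasible_alloc M S a}"
    then obtain a where y: "y = (\<Sum>i\<in>S. v i (a i))" and f: "feasible_alloc M S a" by blast
    have "restrict a S \<in> PiE S (\<lambda>_. Pow M)" using f unfolding feasible_alloc_def by auto
    moreover have "y = (\<Sum>i\<in>S. v i (restrict a S i))" using y by simp
    ultimately show "y \<in> (\<lambda>b. \<Sum>i\<in>S. v i (b i)) ` (PiE S (\<lambda>_. Pow M))" by blast
  qed
  moreover have "finite (PiE S (\<lambda>_. Pow M))" using assms by (simp add: finite_PiE)
  ultimately show ?thesis by (meson finite_imageI finite_subset)
qed

lemma feas_empty: "feasible_alloc M S (\<lambda>_. {})"
  unfolding feasible_alloc_def by auto

lemma wval_ge: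
  assumes "finite S" "finite M" "feasible_alloc M S a"
  shows "(\<Sum>i\<in>S. v i (a i)) \<le> wval M v S"
  unfolding wval_def using feas_vals_finite[OF assms(1,2)] assms(3)
  by (intro Max_ge) auto

lemma wval_le:
  assumes "finite S" "finite M" "\<And>a. feasible_alloc M S a \<Longrightarrow> (\<Sum>i\<in>S. v i (a i)) \<le> B"
  shows "wval M v S \<le> B"
  unfolding wval_def using feas_vals_finite[OF assms(1,2), of v] feas_empty[of M S] assms(3)
  by (subst Max_le_iff) auto

lemma core_convex:
  assumes "p \<in> core N M v" "y \<in> core N M v" "0 \<le> t" "t \<le> 1"
  shows "(\<lambda>k. (1 - t) * p k + t * y k) \<in> core N M v"
proof -
  { fix S assume S: "S \<subseteq> N"
    have a: "(\<Sum>i\<in>N - S. p i) \<le> wval M v N - wval M v S" using assms(1) S unfolding core_def by auto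
    have b: "(\<Sum>i\<in>N - S. y i) \<le> wval M v N - wval M v S" using assms(2) S unfolding core_def by auto
    have "(\<Sum>i\<in>N - S. (1 - t) * p i + t * y i) = (1 - t) * (\<Sum>i\<in>N - S. p i) + t * (\<Sum>i\<in>N - S. y i)"
      by (simp add: sum.distrib sum_distrib_left)
    also have "\<dots> \<le> (1 - t) * (wval M v N - wval M v S) + t * (wval M v N - wval M v S)"
      using a b assms(3,4) by (intro add_mono mult_left_mono) auto
    also have "\<dots> = wval M v N - wval M v S" by algebra
    finally have "(\<Sum>i\<in>N - S. (1 - t) * p i + t * y i) \<le> wval M v N - wval M v S" . }
  moreover have "\<forall>i\<in>N. 0 \<le> (1 - t) * p i + t * y i" using assms unfolding core_def by auto
  moreover have "\<forall>i. i \<notin> N \<longrightarrow> (1 - t) * p i + t * y i = 0" using assms unfolding core_def by auto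
  ultimately show ?thesis unfolding core_def by blast
qed

lemma core_single_le:
  assumes "p \<in> core N M v" "finite N" "S \<subseteq> N" "j \<in> N - S"
  shows "p j \<le> wval M v N - wval M v S"
proof -
  have "p j \<le> (\<Sum>i\<in>N - S. p i)" using assms unfolding core_def
    by (intro member_le_sum) auto
  also have "\<dots> \<le> wval M v N - wval M v S" using assms unfolding core_def by auto
  finally show ?thesis .
qed

lemma loser_zero:
  assumes "valid_CA N M v" "efficient_alloc N M v a" "p \<in> core N M v" "j \<in> N" "a j = {}"
  shows "p j = 0"
proof -
  have fN: "finite N" "finite M" using assms(1) unfolding valid_CA_def by auto
  have fa: "feasible_alloc M (N - {j}) a" using assms(2) unfolding efficient_alloc_def feasible_alloc_def by auto
  have "(\<Sum>i\<in>N. v i (a i)) = v j (a j) + (\<Sum>i\<in>N - {j}. v i (a i))"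
    using fN assms(4) by (simp add: sum.remove)
  also have "\<dots> = (\<Sum>i\<in>N - {j}. v i (a i))" using assms(1,4,5) unfolding valid_CA_def by auto
  also have "\<dots> \<le> wval M v (N - {j})" using wval_ge[OF _ fN(2) fa] fN by auto
  finally have "wval M v N \<le> wval M v (N - {j})" using assms(2) unfolding efficient_alloc_def by simp
  moreover have "p j \<le> wval M v N - wval M v (N - {j})"
    using core_single_le[OF assms(3) fN(1), of "N - {j}" j] assms(4) by auto
  moreover have "p j \<ge> 0" using assms(3,4) unfolding core_def by auto
  ultimately show ?thesis by linarith
qed


lemma dom_from_split:
  fixes x q :: "nat \<Rightarrow> real"
  assumes fin: "finite N" and iN: "i \<in> N" and BN: "B \<subseteq> N - {i}"
    and ex: "sorted_entries N x = sort (map x (sorted_list_of_set B)) @ [x i] @ sort (map x (sorted_list_of_set (N - B - {i})))"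
    and eq: "sorted_entries N q = sort (map q (sorted_list_of_set B)) @ [q i] @ sort (map q (sorted_list_of_set (N - B - {i})))"
    and agree: "\<forall>k\<in>B. q k = x k" and gt: "x i < q i"
  shows "leximin_dominates N q x"
proof -
  have fB: "finite B" using fin BN finite_subset by blast
  have mq: "map q (sorted_list_of_set B) = map x (sorted_list_of_set B)"
    using agree fB by (intro map_cong) auto
  have len: "length (sort (map x (sorted_list_of_set B))) = card B" by simp
  have cB: "card B < card N"
  proof -
    have "card B \<le> card (N - {i})" using BN fin by (intro card_mono) auto
    also have "\<dots> < card N" using fin iN by (metis card_Diff1_less)
    finally show ?thesis .
  qed
  show ?thesis unfolding leximin_dominates_def
  proof (intro exI[of _ "card B"] conjI allI impI cB)
    fix j assume "j < card B"
    then show "sorted_entries N q ! j = sorted_entries N x ! j"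
      unfolding ex eq mq using len by (simp add: nth_append)
  next
    show "sorted_entries N x ! card B < sorted_entries N q ! card B"
      unfolding ex eq mq using len gt by (simp add: nth_append)
  qed
qed

lemma part1:
  assumes val: "valid_CA N M v" and eff: "efficient_alloc N M v a" and Wne: "winners N a \<noteq> {}"
    and blo: "is_BLO N M v \<pi>" and iN: "i \<in> N"
  shows "\<pi> i \<ge> pi_star N M v i / real (card (winners N a))"
proof (rule ccontr)
  define W where "W = winners N a"
  define K where "K = card W"
  have fN: "finite N" "finite M" using val unfolding valid_CA_def by auto
  have WN: "W \<subseteq> N" unfolding W_def winners_def by auto
  have fW: "finite W" using WN fN finite_subset by blast
  have Kpos: "K > 0" using Wne fW unfolding K_def W_def by (simp add: card_gt_0_iff)
  have pic: "\<pi> \<in> core N M v" using blo unfolding is_BLO_def by auto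
  have pinn: "\<forall>k\<in>N. \<pi> k \<ge> 0" using pic unfolding core_def by auto
  assume "\<not> ?thesis"
  then have lt: "real K * \<pi> i < pi_star N M v i"
    using Kpos unfolding K_def W_def by (simp add: field_simps)
  have bdd: "bdd_above ((\<lambda>p. p i) ` core N M v)"
    unfolding bdd_above_def
    using core_single_le[of _ N M v "{}" i] fN iN by auto
  obtain p where pc: "p \<in> core N M v" and pgt: "real K * \<pi> i < p i"
    using lt pic bdd unfolding pi_star_def by (subst (asm) less_cSup_iff) auto
  have iW: "i \<in> W"
  proof (rule ccontr)
    assume "i \<notin> W"
    then have "a i = {}" using iN unfolding W_def winners_def by auto
    then have "p i = 0" using loser_zero[OF val eff pc iN] by simp
    then show False using pgt pinn iN Kpos by (smt (verit) mult_nonneg_nonneg of_nat_0_le_iff)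
  qed
  define c where "c = p i / real K"
  have pic_eq: "p i = real K * c" unfolding c_def using Kpos by simp
  have pilt: "\<pi> i < c" using pgt Kpos unfolding c_def by (simp add: field_simps)
  have pi0: "\<pi> i \<ge> 0" using pinn iN by auto
  define A where "A = {k\<in>N. \<pi> k \<le> \<pi> i}"
  define B where "B = A - {i}"
  define y where "y = (\<lambda>k. if k = i then c else if k \<in> B then \<pi> k else 0)"
  have BN: "B \<subseteq> N - {i}" unfolding B_def A_def by auto
  have fB: "finite B" using BN fN finite_subset by blast
  have sumB: "(\<Sum>k\<in>B. \<pi> k) \<le> (real K - 1) * c"
  proof -
    have "(\<Sum>k\<in>B. \<pi> k) = (\<Sum>k\<in>B \<inter> W. \<pi> k)"
    proof (rule sum.mono_neutral_right[OF fB])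
      show "B \<inter> W \<subseteq> B" by auto
      show "\<forall>k\<in>B - B \<inter> W. \<pi> k = 0"
      proof
        fix k assume k: "k \<in> B - B \<inter> W"
        then have "k \<in> N" "a k = {}" using BN unfolding W_def winners_def by auto
        then show "\<pi> k = 0" using loser_zero[OF val eff pic] by auto
      qed
    qed
    also have "\<dots> \<le> (\<Sum>k\<in>B \<inter> W. \<pi> i)" by (intro sum_mono) (auto simp: B_def A_def)
    also have "\<dots> = real (card (B \<inter> W)) * \<pi> i" by simp
    also have "\<dots> \<le> real (K - 1) * \<pi> i"
    proof -
      have "card (B \<inter> W) \<le> card (W - {i})" using fW by (intro card_mono) (auto simp: B_def)
      also have "\<dots> = K - 1" using iW fW unfolding K_def by simp
      finally show ?thesis using pi0 by (intro mult_right_mono) auto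
    qed
    also have "\<dots> \<le> (real K - 1) * c" using Kpos pilt pi0 by (simp add: of_nat_diff) (intro mult_left_mono, auto)
    finally show ?thesis .
  qed
  have yc: "y \<in> core N M v"
    unfolding core_def
  proof (intro CollectI conjI allI impI ballI)
    fix k assume "k \<notin> N" then show "y k = 0" using iN BN unfolding y_def by auto
  next
    fix k assume "k \<in> N" then show "0 \<le> y k" using pinn pilt pi0 BN unfolding y_def by auto
  next
    fix S assume S: "S \<subseteq> N"
    have e1: "(\<Sum>k\<in>N - S - {i}. y k) = (\<Sum>k\<in>(N - S) \<inter> B. \<pi> k)"
    proof -
      have "(\<Sum>k\<in>N - S - {i}. y k) = (\<Sum>k\<in>N - S - {i}. if k \<in> B then \<pi> k else 0)"
        unfolding y_def by (intro sum.cong) auto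
      also have "\<dots> = (\<Sum>k\<in>(N - S - {i}) \<inter> B. \<pi> k)" using fN by (simp add: sum.inter_restrict)
      also have "(N - S - {i}) \<inter> B = (N - S) \<inter> B" unfolding B_def by auto
      finally show ?thesis .
    qed
    have e2: "(\<Sum>k\<in>(N - S) \<inter> B. \<pi> k) \<le> (\<Sum>k\<in>N - S. \<pi> k)"
      using fN pinn by (intro sum_mono2) auto
    have e3: "(\<Sum>k\<in>(N - S) \<inter> B. \<pi> k) \<le> (\<Sum>k\<in>B. \<pi> k)"
      using fB pinn BN by (intro sum_mono2) auto
    show "(\<Sum>k\<in>N - S. y k) \<le> wval M v N - wval M v S"
    proof (cases "i \<in> S")
      case True
      then have "N - S - {i} = N - S" by auto
      then have "(\<Sum>k\<in>N - S. y k) = (\<Sum>k\<in>(N - S) \<inter> B. \<pi> k)" using e1 by simp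
      also have "\<dots> \<le> (\<Sum>k\<in>N - S. \<pi> k)" by (rule e2)
      also have "\<dots> \<le> wval M v N - wval M v S" using pic S unfolding core_def by auto
      finally show ?thesis .
    next
      case False
      then have "(\<Sum>k\<in>N - S. y k) = y i + (\<Sum>k\<in>N - S - {i}. y k)"
        using iN fN by (subst sum.remove[of _ i]) auto
      also have "\<dots> \<le> c + (real K - 1) * c" using e1 e3 sumB unfolding y_def by simp
      also have "\<dots> = p i" using pic_eq by algebra
      also have "\<dots> \<le> wval M v N - wval M v S" using core_single_le[OF pc fN(1) S] False iN by auto
      finally show ?thesis .
    qed
  qed
  define C where "C = N - A"
  have fC: "finite C" using fN unfolding C_def by auto
  define r where "r = (\<lambda>k. (\<pi> k - \<pi> i) / (\<pi> k + c - \<pi> i))"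
  have rpos: "\<forall>k\<in>C. r k > 0" unfolding r_def C_def A_def using pilt pinn pi0 by (auto intro!: divide_pos_pos)
  define \<delta> where "\<delta> = Min (insert 1 (r ` C)) / 2"
  have dpos: "\<delta> > 0" unfolding \<delta>_def using fC rpos by auto
  have dle: "\<delta> \<le> 1" unfolding \<delta>_def using fC by (simp add: Min_le_iff) 
  have dlt: "\<forall>k\<in>C. \<delta> < r k"
  proof
    fix k assume k: "k \<in> C"
    have "Min (insert 1 (r ` C)) \<le> r k" using fC k by auto
    then show "\<delta> < r k" unfolding \<delta>_def using rpos k by auto
  qed
  define q where "q = (\<lambda>k. (1 - \<delta>) * \<pi> k + \<delta> * y k)"
  have qc: "q \<in> core N M v" unfolding q_def using core_convex[OF pic yc] dpos dle by auto
  have qB: "\<forall>k\<in>B. q k = \<pi> k" unfolding q_def y_def B_def by (auto simp: algebra_simps)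
  have qi: "q i = \<pi> i + \<delta> * (c - \<pi> i)" unfolding q_def y_def by (simp add: algebra_simps)
  have qigt: "\<pi> i < q i" using qi dpos pilt by simp
  have CC: "N - B - {i} = C" unfolding C_def B_def A_def using iN by auto
  have qC: "\<forall>k\<in>C. q i \<le> q k"
  proof
    fix k assume k: "k \<in> C"
    then have kgt: "\<pi> i < \<pi> k" and kB: "k \<notin> B" "k \<noteq> i" unfolding C_def A_def B_def by auto
    have den: "\<pi> k + c - \<pi> i > 0" using kgt pilt pi0 by simp
    have "\<delta> * (\<pi> k + c - \<pi> i) < \<pi> k - \<pi> i"
    proof -
      have "\<delta> < (\<pi> k - \<pi> i) / (\<pi> k + c - \<pi> i)" using dlt k unfolding r_def by auto
      then show ?thesis using den by (simp add: less_divide_eq)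
    qed
    then show "q i \<le> q k" using qi kB unfolding q_def y_def by (simp add: algebra_simps)
  qed
  have sx: "sorted_entries N \<pi> = sort (map \<pi> (sorted_list_of_set B)) @ [\<pi> i] @ sort (map \<pi> (sorted_list_of_set (N - B - {i})))"
    using fN(1) iN BN by (rule sorted_entries_split) (auto simp: B_def A_def CC C_def)
  have sq: "sorted_entries N q = sort (map q (sorted_list_of_set B)) @ [q i] @ sort (map q (sorted_list_of_set (N - B - {i})))"
    using fN(1) iN BN
  proof (rule sorted_entries_split)
    show "\<forall>k\<in>B. q k \<le> q i" using qB qigt by (auto simp: B_def A_def)
    show "\<forall>k\<in>N - B - {i}. q i \<le> q k" using qC CC by simp
  qed
  have "leximin_dominates N q \<pi>" using dom_from_split[OF fN(1) iN BN sx sq qB qigt] .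
  then show False using blo qc unfolding is_BLO_def by blast
qed


definition exv :: "nat \<Rightarrow> nat \<Rightarrow> nat set \<Rightarrow> real" where
  "exv k j A = (if j = 0 then (if A = {1..k} then real k - 1 else 0) else (if j \<in> A then 1 else 0))"

definition exa :: "nat \<Rightarrow> nat \<Rightarrow> nat set" where
  "exa k j = (if j \<in> {1..k} then {j} else {})"

lemma ex_valid: "k \<ge> 1 \<Longrightarrow> valid_CA {0..k} {1..k} (exv k)"
  unfolding valid_CA_def exv_def by auto

lemma ex_bound:
  assumes k: "k \<ge> 1" and S: "S \<subseteq> {0..k}" and f: "feasible_alloc {1..k} S b"
  shows "(\<Sum>j\<in>S. exv k j (b j)) \<le> (if {1..k} \<subseteq> S then real k else real k - 1)"
proof (cases "0 \<in> S \<and> b 0 = {1..k}")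
  case True
  have "\<forall>j\<in>S - {0}. b j = {}"
  proof
    fix j assume j: "j \<in> S - {0}"
    have "b j \<subseteq> {1..k}" using f j unfolding feasible_alloc_def by blast
    moreover have "b j \<inter> b 0 = {}" using f j True unfolding feasible_alloc_def by blast
    ultimately show "b j = {}" using True by auto
  qed
  then have z: "\<forall>j\<in>S - {0}. exv k j (b j) = 0" unfolding exv_def by auto
  have fS: "finite S" using S finite_subset by blast
  have "(\<Sum>j\<in>S. exv k j (b j)) = exv k 0 (b 0) + (\<Sum>j\<in>S - {0}. exv k j (b j))"
    using True fS by (subst sum.remove[of _ 0]) auto
  also have "\<dots> = real k - 1" using z True unfolding exv_def by simp
  finally show ?thesis by simp
next
  case False
  have fS: "finite S" using S finite_subset by blast
  have "(\<Sum>j\<in>S. exv k j (b j)) = (\<Sum>j\<in>S - {0}. exv k j (b j))"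
  proof (cases "0 \<in> S")
    case True
    then have "exv k 0 (b 0) = 0" using False unfolding exv_def by auto
    then show ?thesis using True fS by (simp add: sum.remove)
  next
    case False then show ?thesis by simp
  qed
  also have "\<dots> \<le> (\<Sum>j\<in>S - {0}. 1)" unfolding exv_def by (intro sum_mono) auto
  also have "\<dots> = real (card (S - {0}))" by simp
  also have "\<dots> \<le> (if {1..k} \<subseteq> S then real k else real k - 1)"
  proof -
    have sub: "S - {0} \<subseteq> {1..k}" using S by auto
    show ?thesis
    proof (cases "{1..k} \<subseteq> S")
      case True
      have "card (S - {0}) \<le> card {1..k}" using sub by (intro card_mono) auto
      then show ?thesis using True by simp
    next
      case False
      then have "S - {0} \<subset> {1..k}" using sub by auto
      then have "card (S - {0}) < card {1..k}" by (intro psubset_card_mono) auto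
      then show ?thesis using False by simp
    qed
  qed
  finally show ?thesis .
qed

lemma ex_feas_a: "S \<subseteq> {0..k} \<Longrightarrow> feasible_alloc {1..k} S (exa k)"
  unfolding feasible_alloc_def exa_def by auto

lemma ex_sum_a: "k \<ge> 1 \<Longrightarrow> (\<Sum>j\<in>{0..k}. exv k j (exa k j)) = real k"
proof -
  assume k: "k \<ge> 1"
  have "{0..k} = insert 0 {1..k}" by auto
  then have "(\<Sum>j\<in>{0..k}. exv k j (exa k j)) = exv k 0 (exa k 0) + (\<Sum>j\<in>{1..k}. exv k j (exa k j))"
    by simp
  also have "\<dots> = (\<Sum>j\<in>{1..k}. 1)"
  proof -
    have "exv k 0 (exa k 0) = 0" using k unfolding exv_def exa_def by auto
    moreover have "(\<Sum>j\<in>{1..k}. exv k j (exa k j)) = (\<Sum>j\<in>{1..k}. 1)"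
      unfolding exv_def exa_def by (intro sum.cong) auto
    ultimately show ?thesis by simp
  qed
  finally show ?thesis by simp
qed

lemma ex_sum_a2: "k \<ge> 1 \<Longrightarrow> (\<Sum>j\<in>{1..k}. exv k j (exa k j)) = real k"
  unfolding exv_def exa_def by simp

lemma ex_wN: "k \<ge> 1 \<Longrightarrow> wval {1..k} (exv k) {0..k} = real k"
proof -
  assume k: "k \<ge> 1"
  have "wval {1..k} (exv k) {0..k} \<le> real k"
    by (rule wval_le) (use ex_bound[OF k, of "{0..k}"] in auto)
  moreover have "real k \<le> wval {1..k} (exv k) {0..k}"
    using wval_ge[of "{0..k}" "{1..k}" "exa k" "exv k"] ex_feas_a[of "{0..k}" k] ex_sum_a[OF k] by auto
  ultimately show ?thesis by simp
qed

lemma ex_wS_le: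
  assumes k: "k \<ge> 1" and S: "S \<subseteq> {0..k}"
  shows "wval {1..k} (exv k) S \<le> (if {1..k} \<subseteq> S then real k else real k - 1)"
  by (intro wval_le[OF _ _ ex_bound[OF k S]]) (auto intro: finite_subset[OF S])

lemma ex_core_iff:
  assumes k: "k \<ge> 1"
  shows "x \<in> core {0..k} {1..k} (exv k) \<longleftrightarrow>
     (\<forall>j. j \<notin> {0..k} \<longrightarrow> x j = 0) \<and> x 0 = 0 \<and> (\<forall>j\<in>{1..k}. x j \<ge> 0) \<and> (\<Sum>j\<in>{1..k}. x j) \<le> 1"
proof
  assume xc: "x \<in> core {0..k} {1..k} (exv k)"
  have w1: "wval {1..k} (exv k) {1..k} \<ge> real k"
    using wval_ge[of "{1..k}" "{1..k}" "exa k" "exv k"] ex_feas_a[of "{1..k}" k] ex_sum_a2[OF k] by auto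
  have "x 0 \<le> wval {1..k} (exv k) {0..k} - wval {1..k} (exv k) {1..k}"
    using core_single_le[OF xc, of "{1..k}" 0] by auto
  then have x0: "x 0 \<le> 0" using w1 ex_wN[OF k] by simp
  have w0: "wval {1..k} (exv k) {0} \<ge> real k - 1"
  proof -
    have "feasible_alloc {1..k} {0} (\<lambda>_. {1..k})" unfolding feasible_alloc_def by auto
    from wval_ge[OF _ _ this, of "exv k"] show ?thesis unfolding exv_def by simp
  qed
  have "(\<Sum>j\<in>{0..k} - {0}. x j) \<le> wval {1..k} (exv k) {0..k} - wval {1..k} (exv k) {0}"
    using xc unfolding core_def by auto
  moreover have "{0..k} - {0} = {1..k}" by auto
  ultimately have "(\<Sum>j\<in>{1..k}. x j) \<le> 1" using w0 ex_wN[OF k] by simp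
  moreover have "x 0 \<ge> 0" using xc unfolding core_def by auto
  ultimately show "(\<forall>j. j \<notin> {0..k} \<longrightarrow> x j = 0) \<and> x 0 = 0 \<and> (\<forall>j\<in>{1..k}. x j \<ge> 0) \<and> (\<Sum>j\<in>{1..k}. x j) \<le> 1"
    using xc x0 unfolding core_def by auto
next
  assume H: "(\<forall>j. j \<notin> {0..k} \<longrightarrow> x j = 0) \<and> x 0 = 0 \<and> (\<forall>j\<in>{1..k}. x j \<ge> 0) \<and> (\<Sum>j\<in>{1..k}. x j) \<le> 1"
  have nn: "\<forall>j\<in>{0..k}. x j \<ge> 0" using H by (metis atLeastAtMost_iff le_eq_less_or_eq less_one order.refl not_less)
  show "x \<in> core {0..k} {1..k} (exv k)" unfolding core_def
  proof (intro CollectI conjI allI impI)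
    show "\<forall>j\<in>{0..k}. x j \<ge> 0" by (rule nn)
    fix S assume S: "S \<subseteq> {0..k}"
    show "(\<Sum>j\<in>{0..k} - S. x j) \<le> wval {1..k} (exv k) {0..k} - wval {1..k} (exv k) S"
    proof (cases "{1..k} \<subseteq> S")
      case True
      have "{0..k} - S \<subseteq> {0}"
      proof
        fix x assume "x \<in> {0..k} - S"
        then have "x \<le> k" "x \<notin> S" by auto
        then have "x \<notin> {1..k}" using True by blast
        then show "x \<in> {0}" using \<open>x \<le> k\<close> by auto
      qed
      then have "(\<Sum>j\<in>{0..k} - S. x j) = 0" using H \<open>{0..k} - S \<subseteq> {0}\<close> by (intro sum.neutral) auto
      then show ?thesis using ex_wS_le[OF k S] ex_wN[OF k] True by simp
    next
      case False
      have "(\<Sum>j\<in>{0..k} - S. x j) \<le> (\<Sum>j\<in>{0..k}. x j)" using nn by (intro sum_mono2) auto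
      also have "\<dots> = (\<Sum>j\<in>{1..k}. x j)"
      proof -
        have "{0..k} = insert 0 {1..k}" by auto
        then show ?thesis using H by simp
      qed
      finally show ?thesis using H ex_wS_le[OF k S] ex_wN[OF k] False by simp
    qed
  qed (use H in auto)
qed


abbreviation "LL k \<equiv> sorted_list_of_set {1..(k::nat)}"

lemma ex_sorted:
  assumes k: "k \<ge> 1" and xc: "x \<in> core {0..k} {1..k} (exv k)"
  shows "sorted_entries {0..k} x = x 0 # sort (map x (LL k))"
proof -
  have H: "x 0 = 0" "\<forall>j\<in>{1..k}. x j \<ge> 0" using xc ex_core_iff[OF k] by auto
  have e: "{0..k} - {} - {0} = {1..k}" by auto
  have "sorted_entries {0..k} x = sort (map x (sorted_list_of_set {})) @ [x 0] @
            sort (map x (sorted_list_of_set ({0..k} - {} - {0})))"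
    by (rule sorted_entries_split) (use H e in auto)
  then show ?thesis unfolding e by simp
qed

lemma sum_sort_LL: "sum_list (sort (map x (LL k))) = (\<Sum>j\<in>{1..k}. x j)"
proof -
  have "sum_list (sort (map x (LL k))) = sum_list (map x (LL k))"
    by (metis mset_sort sum_mset_sum_list)
  also have "\<dots> = (\<Sum>j\<in>{1..k}. x j)" by (simp add: sum_list_distinct_conv_sum_set)
  finally show ?thesis .
qed

definition exu :: "nat \<Rightarrow> nat \<Rightarrow> real" where
  "exu k j = (if j \<in> {1..k} then 1 / real k else 0)"

lemma exu_core: "k \<ge> 1 \<Longrightarrow> exu k \<in> core {0..k} {1..k} (exv k)"
  by (subst ex_core_iff) (auto simp: exu_def)

lemma exu_sorted: "k \<ge> 1 \<Longrightarrow> sorted_entries {0..k} (exu k) = 0 # replicate k (1 / real k)"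
proof -
  assume k: "k \<ge> 1"
  have "map (exu k) (LL k) = map (\<lambda>_. 1 / real k) (LL k)" by (intro map_cong) (auto simp: exu_def)
  also have "\<dots> = replicate k (1 / real k)" by (simp add: map_replicate_const)
  finally show ?thesis using ex_sorted[OF k exu_core[OF k]] by (simp add: exu_def)
qed

lemma exu_BLO: "k \<ge> 1 \<Longrightarrow> is_BLO {0..k} {1..k} (exv k) (exu k)"
proof -
  assume k: "k \<ge> 1"
  have ck: "real k * (1 / real k) = 1" using k by simp
  { fix p assume pc: "p \<in> core {0..k} {1..k} (exv k)" and dom: "leximin_dominates {0..k} p (exu k)"
    define ys where "ys = sort (map p (LL k))"
    have H: "p 0 = 0" "(\<Sum>j\<in>{1..k}. p j) \<le> 1" using pc ex_core_iff[OF k] by auto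
    have sp: "sorted_entries {0..k} p = 0 # ys" using ex_sorted[OF k pc] H unfolding ys_def by simp
    have ly: "length ys = k" unfolding ys_def by simp
    have sy: "sorted ys" unfolding ys_def by simp
    obtain m where m: "m < card {0..k}" and eqs: "\<forall>j<m. sorted_entries {0..k} p ! j = sorted_entries {0..k} (exu k) ! j"
      and gt: "sorted_entries {0..k} p ! m > sorted_entries {0..k} (exu k) ! m"
      using dom unfolding leximin_dominates_def by blast
    note su = exu_sorted[OF k]
    have False
    proof (cases m)
      case 0 then show False using gt sp su by simp
    next
      case (Suc m')
      have m'k: "m' < k" using m Suc by simp
      have g: "ys ! m' > 1 / real k" using gt sp su Suc m'k by simp
      have e: "\<forall>j<m'. ys ! j = 1 / real k"
      proof (intro allI impI)
        fix j assume "j < m'"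
        then have "Suc j < m" "j < k" using Suc m'k by auto
        then show "ys ! j = 1 / real k" using eqs sp su by fastforce
      qed
      have "(\<Sum>j\<in>{0..<k}. 1 / real k) < (\<Sum>j\<in>{0..<k}. ys ! j)"
      proof (rule sum_strict_mono_ex1)
        show "\<forall>j\<in>{0..<k}. 1 / real k \<le> ys ! j"
        proof
          fix j assume j: "j \<in> {0..<k}"
          show "1 / real k \<le> ys ! j"
          proof (cases "j < m'")
            case True then show ?thesis using e by simp
          next
            case False
            then have "ys ! m' \<le> ys ! j" using sy j ly by (intro sorted_nth_mono) auto
            then show ?thesis using g by simp
          qed
        qed
        show "\<exists>j\<in>{0..<k}. 1 / real k < ys ! j" using g m'k by auto
      qed simp
      also have "\<dots> = sum_list ys" using ly by (simp add: sum_list_sum_nth)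
      also have "\<dots> = (\<Sum>j\<in>{1..k}. p j)" unfolding ys_def by (rule sum_sort_LL)
      finally show False using H ck by simp
    qed }
  then show ?thesis unfolding is_BLO_def using exu_core[OF k] by blast
qed

lemma ex_BLO_unique:
  assumes k: "k \<ge> 1" and blo: "is_BLO {0..k} {1..k} (exv k) \<pi>"
  shows "\<pi> 1 = 1 / real k"
proof (rule ccontr)
  assume ne: "\<pi> 1 \<noteq> 1 / real k"
  have pc: "\<pi> \<in> core {0..k} {1..k} (exv k)" using blo unfolding is_BLO_def by auto
  have H: "\<pi> 0 = 0" "(\<Sum>j\<in>{1..k}. \<pi> j) \<le> 1" "\<forall>j\<in>{1..k}. \<pi> j \<ge> 0" using pc ex_core_iff[OF k] by auto
  have ck: "real k * (1 / real k) = 1" using k by simp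
  obtain j where j: "j \<in> {1..k}" "\<pi> j < 1 / real k"
  proof (rule ccontr)
    assume "\<not> thesis"
    with that have all: "\<forall>j\<in>{1..k}. 1 / real k \<le> \<pi> j" by force
    have "(\<Sum>j\<in>{1..k}. 1 / real k) < (\<Sum>j\<in>{1..k}. \<pi> j)"
    proof (rule sum_strict_mono_ex1)
      show "\<forall>j\<in>{1..k}. 1 / real k \<le> \<pi> j" by (rule all)
      show "\<exists>j\<in>{1..k}. 1 / real k < \<pi> j" using all ne k by (intro bexI[of _ 1]) force+
    qed simp
    then show False using H ck by simp
  qed
  define ys where "ys = sort (map \<pi> (LL k))"
  have sp: "sorted_entries {0..k} \<pi> = 0 # ys" using ex_sorted[OF k pc] H unfolding ys_def by simp
  have "\<pi> j \<in> set ys" unfolding ys_def using j by simp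
  then obtain r where r: "r < length ys" "ys ! r = \<pi> j" by (metis in_set_conv_nth)
  have "ys ! 0 \<le> ys ! r" using r unfolding ys_def by (intro sorted_nth_mono) auto
  then have y0: "ys ! 0 < 1 / real k" using r j by simp
  have "leximin_dominates {0..k} (exu k) \<pi>"
    unfolding leximin_dominates_def
  proof (intro exI[of _ 1] conjI allI impI)
    show "1 < card {0..k}" using k by simp
    fix jj :: nat assume "jj < 1"
    then show "sorted_entries {0..k} (exu k) ! jj = sorted_entries {0..k} \<pi> ! jj"
      using sp exu_sorted[OF k] by simp
  next
    show "sorted_entries {0..k} \<pi> ! 1 < sorted_entries {0..k} (exu k) ! 1"
      using sp exu_sorted[OF k] y0 k by (cases k) auto
  qed
  then show False using blo exu_core[OF k] unfolding is_BLO_def by blast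
qed

lemma ex_pistar: "k \<ge> 1 \<Longrightarrow> pi_star {0..k} {1..k} (exv k) 1 = 1"
proof -
  assume k: "k \<ge> 1"
  define e where "e = (\<lambda>j::nat. if j = 1 then (1::real) else 0)"
  have ec: "e \<in> core {0..k} {1..k} (exv k)"
    using k by (subst ex_core_iff) (auto simp: e_def)
  have le: "\<forall>x\<in>core {0..k} {1..k} (exv k). x 1 \<le> 1"
  proof
    fix x assume xc: "x \<in> core {0..k} {1..k} (exv k)"
    have H: "(\<Sum>j\<in>{1..k}. x j) \<le> 1" "\<forall>j\<in>{1..k}. x j \<ge> 0" using xc ex_core_iff[OF k] by auto
    have "x 1 \<le> (\<Sum>j\<in>{1..k}. x j)" using H k by (intro member_le_sum) auto
    then show "x 1 \<le> 1" using H by simp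
  qed
  show ?thesis unfolding pi_star_def
    proof (rule cSup_eq_maximum)
    show "1 \<in> (\<lambda>p. p 1) ` core {0..k} {1..k} (exv k)" by (rule image_eqI[OF _ ec]) (simp add: e_def)
  qed (use le in auto)
qed

lemma part2:
  assumes k: "k \<ge> 1"
  shows "\<exists>N M v a i. valid_CA N M v \<and> efficient_alloc N M v a \<and>
                 card (winners N a) = k \<and> i \<in> N \<and> pi_star N M v i > 0 \<and>
                 (\<exists>\<pi>. is_BLO N M v \<pi>) \<and>
                 (\<forall>\<pi>. is_BLO N M v \<pi> \<longrightarrow> \<pi> i = pi_star N M v i / real k)"
proof -
  have "valid_CA {0..k} {1..k} (exv k) \<and> efficient_alloc {0..k} {1..k} (exv k) (exa k) \<and>
                 card (winners {0..k} (exa k)) = k \<and> 1 \<in> {0..k} \<and> pi_star {0..k} {1..k} (exv k) 1 > 0 \<and>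
                 (\<exists>\<pi>. is_BLO {0..k} {1..k} (exv k) \<pi>) \<and>
                 (\<forall>\<pi>. is_BLO {0..k} {1..k} (exv k) \<pi> \<longrightarrow> \<pi> 1 = pi_star {0..k} {1..k} (exv k) 1 / real k)"
  proof (intro conjI)
  show "valid_CA {0..k} {1..k} (exv k)" using ex_valid[OF k] .
  show "efficient_alloc {0..k} {1..k} (exv k) (exa k)"
    unfolding efficient_alloc_def using ex_feas_a[of "{0..k}" k] ex_sum_a[OF k] ex_wN[OF k] by simp
  have "winners {0..k} (exa k) = {1..k}" unfolding winners_def exa_def by auto
  then show "card (winners {0..k} (exa k)) = k" by simp
  show "1 \<in> {0..k}" using k by simp
  show "pi_star {0..k} {1..k} (exv k) 1 > 0" using ex_pistar[OF k] by simp
  show "\<exists>\<pi>. is_BLO {0..k} {1..k} (exv k) \<pi>" using exu_BLO[OF k] by blast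
  show "\<forall>\<pi>. is_BLO {0..k} {1..k} (exv k) \<pi> \<longrightarrow> \<pi> 1 = pi_star {0..k} {1..k} (exv k) 1 / real k"
    using ex_BLO_unique[OF k] ex_pistar[OF k] by simp
  qed
  then show ?thesis by blast
qed

theorem theorem2:
  shows "(\<forall>N M v a \<pi> i.
            valid_CA N M v \<longrightarrow> efficient_alloc N M v a \<longrightarrow> winners N a \<noteq> {} \<longrightarrow>
            is_BLO N M v \<pi> \<longrightarrow> i \<in> N \<longrightarrow>
            \<pi> i \<ge> pi_star N M v i / real (card (winners N a)))
       \<and> (\<forall>k::nat. k \<ge> 1 \<longrightarrow>
            (\<exists>N M v a i. valid_CA N M v \<and> efficient_alloc N M v a \<and>
                 card (winners N a) = k \<and> i \<in> N \<and> pi_star N M v i > 0 \<and>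
                 (\<exists>\<pi>. is_BLO N M v \<pi>) \<and>
                 (\<forall>\<pi>. is_BLO N M v \<pi> \<longrightarrow> \<pi> i = pi_star N M v i / real k)))"
  using part1 part2 by blast

end
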